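(* Let $\Gamma=\{f_1,\dots,f_n\}$ be a family of weight-functions and suppose there is a nonzero vector $\mathbf{r}=(r_1,\dots,r_n)\in[0,1]^n$ such that $f_i(x_1,\dots,x_n)\le f_i(x_1+\lambda r_1,\dots,x_n+\lambda r_n)$ for every $i\in\{1,\dots,n\}$, every $\mathbf{x}\in[0,1]^n$ and every $\lambda\in[0,1]$ with $(x_1+\lambda r_1,\dots,x_n+\lambda r_n)\in[0,1]^n$. Then $\mathsf{BGM}_\Gamma$ (i.e. $\mathbf{x}\mapsto\sum_i f_i(\mathbf{x})x_i$) is an $\mathbf{r}$-increasing pre-aggregation function.
   Context: A family of weight-functions (FWF) is a family $\Gamma=\{f_i:[0,1]^n\to[0,1]\mid 1\le i\le n\}$ with $\sum_{i=1}^n f_i(\mathbf{x})=1$ for all $\mathbf{x}\in[0,1]^n$; $\mathsf{BGM}_\Gamma(\mathbf{x})=\sum_{i=1}^n f_i(\mathbf{x})\,x_i$. For a nonzero $\mathbf{r}\in\mathbb{R}^n$, $F:[0,1]^n\to[0,1]$ is $\mathbf{r}$-increasing if $F(\mathbf{x})\le F(x_1+tr_1,\dots,x_n+tr_n)$ for all $\mathbf{x}\in[0,1]^n$ and $t>0$ with $(x_1+tr_1,\dots,x_n+tr_n)\in[0,1]^n$. $F$ is a pre-aggregation function if $F(0,\dots,0)=0$, $F(1,\dots,1)=1$ and $F$ is $\mathbf{r}$-increasing for some nonzero $\mathbf{r}\in[0,1]^n$. *)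

theory Defs
  imports "HOL-Analysis.Analysis"
begin

definition unit_cube :: "(real ^ 'n) set" where
  "unit_cube = {x. \<forall>i. 0 \<le> x $ i \<and> x $ i \<le> 1}"

definition FWF :: "('n::finite \<Rightarrow> real ^ 'n \<Rightarrow> real) \<Rightarrow> bool" where
  "FWF f \<longleftrightarrow> (\<forall>x\<in>unit_cube. (\<forall>i. 0 \<le> f i x \<and> f i x \<le> 1) \<and> (\<Sum>i\<in>UNIV. f i x) = 1)"

definition BGM :: "('n::finite \<Rightarrow> real ^ 'n \<Rightarrow> real) \<Rightarrow> real ^ 'n \<Rightarrow> real" where
  "BGM f x = (\<Sum>i\<in>UNIV. f i x * x $ i)"

definition r_increasing :: "real ^ 'n \<Rightarrow> (real ^ 'n \<Rightarrow> real) \<Rightarrow> bool" where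
  "r_increasing r F \<longleftrightarrow>
     (\<forall>x\<in>unit_cube. \<forall>t::real. t > 0 \<longrightarrow> x + t *\<^sub>R r \<in> unit_cube \<longrightarrow> F x \<le> F (x + t *\<^sub>R r))"

definition pre_aggregation :: "(real ^ 'n \<Rightarrow> real) \<Rightarrow> bool" where
  "pre_aggregation F \<longleftrightarrow>
     (\<forall>x\<in>unit_cube. 0 \<le> F x \<and> F x \<le> 1) \<and>
     F (vec 0) = 0 \<and> F (vec 1) = 1 \<and>
     (\<exists>r\<in>unit_cube. r \<noteq> 0 \<and> r_increasing r F)"

end

theory Submission
  imports Defs
begin

lemma cube_convex:
  assumes "x \<in> unit_cube" "x + t *\<^sub>R r \<in> unit_cube" "0 \<le> s" "s \<le> t"
  shows "x + s *\<^sub>R r \<in> unit_cube"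
proof -
  have "\<forall>i. 0 \<le> (x + s *\<^sub>R r) $ i \<and> (x + s *\<^sub>R r) $ i \<le> 1"
  proof
    fix i
    have a: "0 \<le> x $ i" "x $ i \<le> 1" "0 \<le> x $ i + t * r $ i" "x $ i + t * r $ i \<le> 1"
      using assms(1,2) unfolding unit_cube_def by auto
    have "t > 0 \<or> s = 0" using assms(3,4) by auto
    then show "0 \<le> (x + s *\<^sub>R r) $ i \<and> (x + s *\<^sub>R r) $ i \<le> 1"
    proof
      assume tp: "t > 0"
      define c where "c = s / t"
      have c: "0 \<le> c" "c \<le> 1" using assms(3,4) tp by (auto simp: c_def)
      have "x $ i + s * r $ i = (1 - c) * x $ i + c * (x $ i + t * r $ i)"
        using tp by (simp add: c_def field_simps)
      moreover have "0 \<le> (1 - c) * x $ i + c * (x $ i + t * r $ i)"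
        using c a by simp
      moreover have "(1 - c) * x $ i + c * (x $ i + t * r $ i) \<le> (1 - c) * 1 + c * 1"
        using c a by (intro add_mono mult_left_mono) auto
      ultimately show ?thesis by simp
    qed (use a in simp)
  qed
  then show ?thesis unfolding unit_cube_def by simp
qed

theorem proposition11:
  fixes f :: "'n::finite \<Rightarrow> real ^ 'n \<Rightarrow> real" and r :: "real ^ 'n"
  assumes "FWF f"
    and "r \<in> unit_cube" and "r \<noteq> 0"
    and "\<And>i x lam. x \<in> unit_cube \<Longrightarrow> 0 \<le> lam \<Longrightarrow> lam \<le> 1 \<Longrightarrow>
           x + lam *\<^sub>R r \<in> unit_cube \<Longrightarrow> f i x \<le> f i (x + lam *\<^sub>R r)"
  shows "pre_aggregation (BGM f) \<and> r_increasing r (BGM f)"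
proof -
  note F = assms(1)[unfolded FWF_def]
  have mono: "\<And>i x t. x \<in> unit_cube \<Longrightarrow> 0 \<le> t \<Longrightarrow> t \<le> real n \<Longrightarrow>
      x + t *\<^sub>R r \<in> unit_cube \<Longrightarrow> f i x \<le> f i (x + t *\<^sub>R r)" for n
  proof (induction n)
    case 0 then show ?case by simp
  next
    case (Suc n)
    show ?case
    proof (cases "t \<le> 1")
      case True then show ?thesis using Suc.prems assms(4) by blast
    next
      case False
      let ?y = "x + (t - 1) *\<^sub>R r"
      have y: "?y \<in> unit_cube" using cube_convex[OF Suc.prems(1) Suc.prems(4)] False by simp
      have "f i x \<le> f i ?y" using Suc.IH[OF Suc.prems(1) _ _ y] False Suc.prems(3) by simp
      also have e: "?y + 1 *\<^sub>R r = x + t *\<^sub>R r" by (simp add: algebra_simps)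
      have "f i ?y \<le> f i (?y + 1 *\<^sub>R r)" using assms(4)[OF y, of 1 i] Suc.prems(4) e by (metis order_refl zero_le_one)
      then have "f i ?y \<le> f i (x + t *\<^sub>R r)" by (simp only: e)
      finally show ?thesis .
    qed
  qed
  have mono': "f i x \<le> f i (x + t *\<^sub>R r)" if "x \<in> unit_cube" "0 \<le> t" "x + t *\<^sub>R r \<in> unit_cube" for i x t
  proof -
    obtain n where "t \<le> real n" using real_arch_simple by blast
    then show ?thesis using mono that by blast
  qed
  have rinc: "r_increasing r (BGM f)"
    unfolding r_increasing_def
  proof (intro ballI allI impI)
    fix x t assume x: "x \<in> unit_cube" and t: "(t::real) > 0" and xt: "x + t *\<^sub>R r \<in> unit_cube"
    have le: "\<And>i. f i x \<le> f i (x + t *\<^sub>R r)" using mono' x t xt by simp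
    have s1: "(\<Sum>i\<in>UNIV. f i x) = (\<Sum>i\<in>UNIV. f i (x + t *\<^sub>R r))" using F x xt by simp
    have eq: "\<And>i. f i x = f i (x + t *\<^sub>R r)"
    proof (rule ccontr)
      fix i assume "f i x \<noteq> f i (x + t *\<^sub>R r)"
      then have "f i x < f i (x + t *\<^sub>R r)" using le[of i] by simp
      then have "(\<Sum>i\<in>UNIV. f i x) < (\<Sum>i\<in>UNIV. f i (x + t *\<^sub>R r))"
        using le by (intro sum_strict_mono_ex1) auto
      then show False using s1 by simp
    qed
    have "BGM f (x + t *\<^sub>R r) = (\<Sum>i\<in>UNIV. f i x * x $ i + t * (f i x * r $ i))"
      unfolding BGM_def using eq by (intro sum.cong) (auto simp: algebra_simps)
    also have "\<dots> = BGM f x + t * (\<Sum>i\<in>UNIV. f i x * r $ i)"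
      unfolding BGM_def by (simp add: sum.distrib sum_distrib_left)
    also have "\<dots> \<ge> BGM f x"
    proof -
      have "0 \<le> (\<Sum>i\<in>UNIV. f i x * r $ i)"
        using F x assms(2) unfolding unit_cube_def by (intro sum_nonneg mult_nonneg_nonneg) auto
      then show ?thesis using t by simp
    qed
    finally show "BGM f x \<le> BGM f (x + t *\<^sub>R r)" .
  qed
  have range: "0 \<le> BGM f x \<and> BGM f x \<le> 1" if x: "x \<in> unit_cube" for x
  proof
    show "0 \<le> BGM f x" unfolding BGM_def
      using F x unfolding unit_cube_def by (intro sum_nonneg mult_nonneg_nonneg) auto
    have "BGM f x \<le> (\<Sum>i\<in>UNIV. f i x * 1)" unfolding BGM_def
      using F x unfolding unit_cube_def by (intro sum_mono mult_left_mono) auto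
    then show "BGM f x \<le> 1" using F x by simp
  qed
  have v1: "vec 1 \<in> unit_cube" unfolding unit_cube_def by simp
  have "BGM f (vec 0) = 0" unfolding BGM_def by simp
  moreover have "BGM f (vec 1) = 1" unfolding BGM_def using bspec[OF F v1] by (simp del: vec_1)
  ultimately show ?thesis unfolding pre_aggregation_def using range rinc assms(2,3) by blast
qed

end
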